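(* Let $S$ be an infinite set, $\mathcal{F}\subseteq 2^S$ nontrivial and closed under finite unions, and let $(C,\mathbf{A})$ be a conditional classification problem with $\mathbf{A}=(A_1,\dots,A_k)$. Then the following are equivalent: (i) $\mathbf{A}\in\mathit{ccore}_k(C,\mathcal{F})$; (ii) for all $1\le i\le k$: $A_i\notin\mathit{cclass}_1(C,\mathcal{F})$ and $A_i\in\mathit{ccohesive}(S\setminus C,\mathcal{F})$.
   Context: $\mathcal{F}$ is nontrivial if $\emptyset,S\in\mathcal{F}$ and for all $Q\in\mathcal{F}$ and finite $E\subseteq S$ both $Q\cup E\in\mathcal{F}$ and $Q\setminus E\in\mathcal{F}$. A classification problem is a vector $(A_1,\dots,A_k)$, $k\ge1$, of pairwise disjoint infinite subsets of $S$, of length $k$. A conditional classification problem is a pair $(C,\mathbf{A})$ with $C\subseteq S$, $\mathbf{A}$ a classification problem and $C$ disjoint from all components of $\mathbf{A}$. For vectors $\mathbf{B}=(B_1,\dots,B_m)$, $\mathbf{Q}=(Q_1,\dots,Q_k)$, $\mathbf{B}\le\mathbf{Q}$ means $1\le m\le k$ and there is an injective $\sigma:\{1,\dots,m\}\to\{1,\dots,k\}$ with $B_i\subseteq Q_{\sigma(i)}$. An $\mathcal{F}$-partition is a vector of pairwise disjoint members of $\mathcal{F}$ whose union is $S$. $\mathit{cclass}_k(C,\mathcal{F})$ is the set of classification problems $\mathbf{A}$ of length $k$ such that $(C,\mathbf{A})$ is a conditional classification problem and there is an $\mathcal{F}$-partition $(Q_0,Q_1,\dots,Q_k)$ with $C\subseteq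 Q_0$ and $\mathbf{A}\le(Q_1,\dots,Q_k)$ (a single set $A$ is identified with the vector $(A)$). $\mathit{ccore}_k(C,\mathcal{F})$ is the set of classification problems $\mathbf{A}$ of length $k$ with $(C,\mathbf{A})$ a conditional classification problem such that every classification problem $\mathbf{A}'\le\mathbf{A}$ (any length $\ge1$) satisfies $\mathbf{A}'\notin\mathit{cclass}_{|\mathbf{A}'|}(C,\mathcal{F})$. For $D\subseteq S$, $A\in\mathit{ccohesive}(D,\mathcal{F})$ iff $A$ is infinite and for every $Q\subseteq D$ with $Q\in\mathcal{F}$ and $S\setminus Q\in\mathcal{F}$, either $A\cap Q$ or $A\setminus Q$ is finite. *)

theory Defs
  imports Main
begin

text \<open>Vectors of sets are represented as lists; component i is xs ! i (0-based).\<close>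

definition nontrivial :: "'a set \<Rightarrow> 'a set set \<Rightarrow> bool" where
  "nontrivial S F \<longleftrightarrow> {} \<in> F \<and> S \<in> F \<and>
     (\<forall>Q\<in>F. \<forall>E. finite E \<and> E \<subseteq> S \<longrightarrow> Q \<union> E \<in> F \<and> Q - E \<in> F)"

definition pairwise_disj :: "'a set list \<Rightarrow> bool" where
  "pairwise_disj xs \<longleftrightarrow> (\<forall>i<length xs. \<forall>j<length xs. i \<noteq> j \<longrightarrow> xs ! i \<inter> xs ! j = {})"

definition class_problem :: "'a set \<Rightarrow> 'a set list \<Rightarrow> bool" where
  "class_problem S A \<longleftrightarrow> length A \<ge> 1 \<and> pairwise_disj A \<and>
     (\<forall>i<length A. infinite (A ! i) \<and> A ! i \<subseteq> S)"

definition cond_class_problem :: "'a set \<Rightarrow> 'a set \<Rightarrow> 'a set list \<Rightarrow> bool" where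
  "cond_class_problem S C A \<longleftrightarrow> C \<subseteq> S \<and> class_problem S A \<and>
     (\<forall>i<length A. C \<inter> A ! i = {})"

definition vec_le :: "'a set list \<Rightarrow> 'a set list \<Rightarrow> bool" where
  "vec_le B Q \<longleftrightarrow> 1 \<le> length B \<and> length B \<le> length Q \<and>
     (\<exists>\<sigma>. inj_on \<sigma> {..<length B} \<and> \<sigma> ` {..<length B} \<subseteq> {..<length Q} \<and>
          (\<forall>i<length B. B ! i \<subseteq> Q ! (\<sigma> i)))"

definition F_partition :: "'a set \<Rightarrow> 'a set set \<Rightarrow> 'a set list \<Rightarrow> bool" where
  "F_partition S F Q \<longleftrightarrow> pairwise_disj Q \<and> set Q \<subseteq> F \<and> \<Union>(set Q) = S"

definition cclass :: "'a set \<Rightarrow> nat \<Rightarrow> 'a set \<Rightarrow> 'a set set \<Rightarrow> 'a set list set" where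
  "cclass S k C F = {A. length A = k \<and> cond_class_problem S C A \<and>
     (\<exists>Q0 Qs. length Qs = k \<and> F_partition S F (Q0 # Qs) \<and> C \<subseteq> Q0 \<and> vec_le A Qs)}"

definition ccore :: "'a set \<Rightarrow> nat \<Rightarrow> 'a set \<Rightarrow> 'a set set \<Rightarrow> 'a set list set" where
  "ccore S k C F = {A. length A = k \<and> cond_class_problem S C A \<and>
     (\<forall>A'. class_problem S A' \<and> vec_le A' A \<longrightarrow> A' \<notin> cclass S (length A') C F)}"

definition ccohesive :: "'a set \<Rightarrow> 'a set \<Rightarrow> 'a set set \<Rightarrow> 'a set set" where
  "ccohesive S D F = {A. infinite A \<and>
     (\<forall>Q. Q \<subseteq> D \<and> Q \<in> F \<and> S - Q \<in> F \<longrightarrow> finite (A \<inter> Q) \<or> finite (A - Q))}"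

end

theory Submission
  imports Defs
begin

lemma union_in_F:
  assumes "finite X" "X \<subseteq> F" "{} \<in> F" "\<forall>P\<in>F. \<forall>Q\<in>F. P \<union> Q \<in> F"
  shows "\<Union>X \<in> F"
  using assms by (induction X rule: finite_induct) auto

lemma pd2: "pairwise_disj [a, b] \<longleftrightarrow> a \<inter> b = {}"
  unfolding pairwise_disj_def
  by (auto simp: less_Suc_eq nth_Cons split: nat.splits)

lemma cclass1_intro:
  assumes "Q0 \<in> F" "Q1 \<in> F" "Q0 \<inter> Q1 = {}" "Q0 \<union> Q1 = S" "C \<subseteq> Q0" "B \<subseteq> Q1"
    "cond_class_problem S C [B]"
  shows "[B] \<in> cclass S 1 C F"
proof -
  have "F_partition S F [Q0, Q1]" using assms unfolding F_partition_def pd2 by auto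
  moreover have "vec_le [B] [Q1]" unfolding vec_le_def using assms
    by (intro conjI exI[of _ id]) auto
  ultimately show ?thesis using assms unfolding cclass_def
    by (intro CollectI conjI exI[of _ Q0] exI[of _ "[Q1]"]) auto
qed

lemma ccp_single:
  assumes "cond_class_problem S C A" "j < length A"
  shows "cond_class_problem S C [A ! j]"
  using assms unfolding cond_class_problem_def class_problem_def pairwise_disj_def
  by auto

theorem theorem4p4:
  fixes S :: "'a set" and F :: "'a set set" and C :: "'a set" and A :: "'a set list"
  assumes "infinite S"
    and "F \<subseteq> Pow S"
    and "nontrivial S F"
    and "\<forall>P\<in>F. \<forall>Q\<in>F. P \<union> Q \<in> F"
    and "cond_class_problem S C A"
    and "k = length A"
  shows "A \<in> ccore S k C F \<longleftrightarrow>
    (\<forall>i<k. [A ! i] \<notin> cclass S 1 C F \<and> A ! i \<in> ccohesive S (S - C) F)"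
proof
  have nt: "{} \<in> F" "S \<in> F"
    "\<And>Q E. Q \<in> F \<Longrightarrow> finite E \<Longrightarrow> E \<subseteq> S \<Longrightarrow> Q \<union> E \<in> F \<and> Q - E \<in> F"
    using assms(3) unfolding nontrivial_def by auto
  have AiS: "\<And>i. i < k \<Longrightarrow> A ! i \<subseteq> S \<and> infinite (A ! i) \<and> C \<inter> A ! i = {}"
    using assms(5,6) unfolding cond_class_problem_def class_problem_def by auto
  have CS: "C \<subseteq> S" using assms(5) unfolding cond_class_problem_def by auto
  {
    assume core: "A \<in> ccore S k C F"
    show "\<forall>i<k. [A ! i] \<notin> cclass S 1 C F \<and> A ! i \<in> ccohesive S (S - C) F"
    proof (intro allI impI conjI)
      fix i assume i: "i < k"
      have le1: "\<And>B. B \<subseteq> A ! i \<Longrightarrow> vec_le [B] A"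
      proof -
        fix B assume "B \<subseteq> A ! i"
        moreover have "inj_on (\<lambda>_. i) {..<Suc 0}" by (simp add: lessThan_Suc)
        ultimately show "vec_le [B] A" unfolding vec_le_def using i assms(6)
          by (intro conjI exI[of _ "\<lambda>_. i"]) auto
      qed
      have cp1: "\<And>B. B \<subseteq> A ! i \<Longrightarrow> infinite B \<Longrightarrow> class_problem S [B]"
        using AiS[OF i] unfolding class_problem_def pairwise_disj_def by auto
      have nc: "\<And>B. B \<subseteq> A ! i \<Longrightarrow> infinite B \<Longrightarrow> [B] \<notin> cclass S 1 C F"
              proof -
        fix B assume "B \<subseteq> A ! i" "infinite B"
        moreover have "\<forall>A'. class_problem S A' \<and> vec_le A' A \<longrightarrow> A' \<notin> cclass S (length A') C F"
          using core unfolding ccore_def by blast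
        ultimately have "class_problem S [B] \<and> vec_le [B] A \<longrightarrow> [B] \<notin> cclass S (length [B]) C F"
          by blast
        moreover have "class_problem S [B] \<and> vec_le [B] A"
          using le1 cp1 \<open>B \<subseteq> A ! i\<close> \<open>infinite B\<close> by blast
        ultimately show "[B] \<notin> cclass S 1 C F" by simp
      qed
      show "[A ! i] \<notin> cclass S 1 C F" using nc AiS[OF i] by blast
      show "A ! i \<in> ccohesive S (S - C) F"
        unfolding ccohesive_def
      proof (intro CollectI conjI allI impI)
        show "infinite (A ! i)" using AiS[OF i] by blast
        fix Q assume Q: "Q \<subseteq> S - C \<and> Q \<in> F \<and> S - Q \<in> F"
        show "finite (A ! i \<inter> Q) \<or> finite (A ! i - Q)"
        proof (rule ccontr)
          assume "\<not> ?thesis"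
          hence inf: "infinite (A ! i \<inter> Q)" by blast
          have "cond_class_problem S C [A ! i \<inter> Q]"
            using AiS[OF i] CS inf unfolding cond_class_problem_def class_problem_def pairwise_disj_def
            by auto
          note ccp = this
          have "[A ! i \<inter> Q] \<in> cclass S 1 C F"
          proof (rule cclass1_intro[of "S - Q" F Q S C "A ! i \<inter> Q"])
            show "C \<subseteq> S - Q" using Q CS by blast
            show "S - Q \<union> Q = S" using Q by blast
          qed (use Q ccp in auto)
          thus False using nc[of "A ! i \<inter> Q"] inf by blast
        qed
      qed
    qed
  }
  {
    assume H: "\<forall>i<k. [A ! i] \<notin> cclass S 1 C F \<and> A ! i \<in> ccohesive S (S - C) F"
    show "A \<in> ccore S k C F"
      unfolding ccore_def
    proof (intro CollectI conjI allI impI)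
      show "length A = k" using assms(6) by simp
      show "cond_class_problem S C A" by fact
      fix A' assume A': "class_problem S A' \<and> vec_le A' A"
      show "A' \<notin> cclass S (length A') C F"
      proof
        assume "A' \<in> cclass S (length A') C F"
        then obtain Q0 Qs where Qs: "length Qs = length A'" "F_partition S F (Q0 # Qs)"
          "C \<subseteq> Q0" "vec_le A' Qs" unfolding cclass_def by blast
        obtain \<sigma> where \<sigma>: "\<sigma> ` {..<length A'} \<subseteq> {..<length A}"
          "\<forall>i<length A'. A' ! i \<subseteq> A ! (\<sigma> i)" "1 \<le> length A'"
          using A' unfolding vec_le_def by blast
        obtain \<tau> where \<tau>: "\<tau> ` {..<length A'} \<subseteq> {..<length Qs}"
          "\<forall>i<length A'. A' ! i \<subseteq> Qs ! (\<tau> i)"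
          using Qs(4) unfolding vec_le_def by blast
        have pos: "0 < length A'" using \<sigma>(3) by linarith
        define j where "j = \<sigma> 0"
        define l where "l = \<tau> 0"
        define B where "B = A' ! 0"
        have j: "j < k"
        proof -
          have "0 \<in> {..<length A'}" using \<sigma>(3) by auto
          thus ?thesis using \<sigma>(1) assms(6) unfolding j_def by blast
        qed
        have l: "l < length Qs"
        proof -
          have "0 \<in> {..<length A'}" using \<sigma>(3) by auto
          thus ?thesis using \<tau>(1) unfolding l_def by blast
        qed
        have BA: "B \<subseteq> A ! j" using \<sigma>(2) pos unfolding B_def j_def by auto
        define Q where "Q = Qs ! l"
        have BQ: "B \<subseteq> Q" using \<tau>(2) pos unfolding B_def l_def Q_def by auto
        have Binf: "infinite B" using A' pos unfolding class_problem_def B_def by auto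
        define L where "L = Q0 # Qs"
        have pd: "\<And>a b. a < length L \<Longrightarrow> b < length L \<Longrightarrow> a \<noteq> b \<Longrightarrow> L ! a \<inter> L ! b = {}"
          using Qs(2) unfolding F_partition_def pairwise_disj_def L_def by blast
        have LF: "set L \<subseteq> F" and LS: "\<Union>(set L) = S"
          using Qs(2) unfolding F_partition_def L_def by auto
        have QL: "Q = L ! Suc l" unfolding Q_def L_def by simp
        have sl: "Suc l < length L" using l unfolding L_def by simp
        have QF: "Q \<in> F" using LF sl QL nth_mem by blast
        have QS: "Q \<subseteq> S" using QF assms(2) by blast
        have QC: "Q \<inter> C = {}" using pd[of "Suc l" 0] sl Qs(3) QL unfolding L_def by auto
        define X where "X = (\<lambda>i. L ! i) ` ({..<length L} - {Suc l})"
        have XF: "\<Union>X \<in> F"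
          by (rule union_in_F) (use LF nt(1) assms(4) nth_mem in \<open>fastforce simp: X_def\<close>)+
        have "\<Union>X = S - Q"
        proof
          show "\<Union>X \<subseteq> S - Q"
          proof
            fix x assume "x \<in> \<Union>X"
            then obtain i where i: "i < length L" "i \<noteq> Suc l" "x \<in> L ! i" unfolding X_def by auto
            have "x \<in> S" using LS i nth_mem by blast
            moreover have "x \<notin> Q" using pd[of i "Suc l"] i sl QL by auto
            ultimately show "x \<in> S - Q" by blast
          qed
          show "S - Q \<subseteq> \<Union>X"
          proof
            fix x assume x: "x \<in> S - Q"
            then obtain i where i: "i < length L" "x \<in> L ! i" using LS by (auto simp: in_set_conv_nth)
            have "i \<noteq> Suc l" using x i QL by auto
            thus "x \<in> \<Union>X" using i unfolding X_def by auto
          qed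
        qed
        hence SQF: "S - Q \<in> F" using XF by simp
        have coh: "A ! j \<in> ccohesive S (S - C) F" using H j by blast
        have "infinite (A ! j \<inter> Q)" using BA BQ Binf
          by (meson Int_greatest finite_subset)
        hence fin: "finite (A ! j - Q)" using coh QS QC QF SQF unfolding ccohesive_def by blast
        define E where "E = A ! j - Q"
        have ES: "E \<subseteq> S" using AiS[OF j] unfolding E_def by auto
        have "[A ! j] \<in> cclass S 1 C F"
        proof (rule cclass1_intro[of "(S - Q) - E" F "Q \<union> E"])
          show "S - Q - E \<in> F" using nt(3)[OF SQF] fin ES unfolding E_def by blast
          show "Q \<union> E \<in> F" using nt(3)[OF QF] fin ES unfolding E_def by blast
          show "(S - Q - E) \<inter> (Q \<union> E) = {}" by blast
          show "S - Q - E \<union> (Q \<union> E) = S" using QS ES by blast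
          show "C \<subseteq> S - Q - E" using CS QC AiS[OF j] unfolding E_def by blast
          show "A ! j \<subseteq> Q \<union> E" unfolding E_def by blast
          show "cond_class_problem S C [A ! j]" using ccp_single assms(5,6) j by blast
        qed
        thus False using H j by blast
      qed
    qed
  }
qed

end
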